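(* Let $\mathrm x$ be a binary word of length $m<\Bbbk-1$. Then, as operators on $\widetilde{\mathcal H}=\mathcal H\oplus P'_{[\![1]\!]}\mathcal H$, $$\widetilde U_\theta^*\,(P_{[\![\mathrm x]\!]}\oplus0)\,\widetilde U_\theta=P_{[\![0]\!]}P_{\bar T^{-1}[\![\mathrm x]\!]}\oplus P'_{[\![1]\!]}P_{\bar T^{-1}[\![\mathrm x]\!]},$$ $$\widetilde U_\theta^*\,(0\oplus P'_{[\![1]\!]}P_{[\![\mathrm x]\!]})\,\widetilde U_\theta=P_{[\![1]\!]}P_{\bar T^{-1}[\![\mathrm x]\!]}\oplus0 .$$
   Context: Let $\Bbbk\geq3$ and $\mathcal H=(\mathbb C^2)^{\otimes\Bbbk}$ with orthonormal basis $|\mathrm y\rangle=|\mathrm y_1\rangle\otimes\cdots\otimes|\mathrm y_\Bbbk\rangle$, $\mathrm y_i\in\{0,1\}$. For a binary word $\mathrm w=\mathrm w_1\dots\mathrm w_m$ ($m\leq\Bbbk$), $P_{[\![\mathrm w]\!]}$ is the orthogonal projection onto the span of the $|\mathrm y\rangle$ with $\mathrm y_1\dots\mathrm y_m=\mathrm w$; $[\![\mathrm w]\!]\subset[0,1]$ is the dyadic cylinder of points whose first $m$ binary digits are $\mathrm w$. $\bar T(x)=2x\bmod1$, so $\bar T^{-n}[\![\mathrm w]\!]=\bigcup_{|\mathrm y|=n}[\![\mathrm y\mathrm w]\!]$, and $P_{\bar T^{-n}[\![\mathrm w]\!]}=\sum_{|\mathrm y|=n}P_{[\![\mathrm y\mathrm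 w]\!]}$. Let $\mathbf U$ be a $2\times2$ unitary with all entries of modulus $2^{-1/2}$, $\bar U|\mathrm y\rangle=|\mathrm y_2\rangle\otimes\cdots\otimes|\mathrm y_\Bbbk\rangle\otimes\mathbf U|\mathrm y_1\rangle$, $\sigma$ the unitary exchanging the last two tensor factors, and $P'_{[\![j]\!]}=\bar UP_{[\![j]\!]}\bar U^*$ for $j\in\{0,1\}$. Tower space $\widetilde{\mathcal H}=\mathcal H\oplus P'_{[\![1]\!]}\mathcal H$ with the direct-sum scalar product, and $\widetilde U_\theta(\phi_0,\phi_1)=\big(\sigma\bar UP'_{[\![1]\!]}\phi_1+\bar UP_{[\![0]\!]}\phi_0,\ e^{i\theta}\bar UP_{[\![1]\!]}\phi_0\big)$, $\theta\in\mathbb R$. *)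

theory Defs
  imports Complex_Main
begin

text \<open>Binary words are \<open>bool list\<close> (True = digit 1, False = digit 0).
  A vector of \<open>H = (C^2)^{\<otimes>k}\<close> is a function \<open>bool list \<Rightarrow> complex\<close>
  giving the coordinates in the basis \<open>|y\<rangle>\<close>, \<open>length y = k\<close>, and vanishing elsewhere.\<close>

definition words :: "nat \<Rightarrow> bool list set" where
  "words n = {y. length y = n}"

definition Hsp :: "nat \<Rightarrow> (bool list \<Rightarrow> complex) set" where
  "Hsp k = {\<phi>. \<forall>y. length y \<noteq> k \<longrightarrow> \<phi> y = 0}"

definition hinner :: "nat \<Rightarrow> (bool list \<Rightarrow> complex) \<Rightarrow> (bool list \<Rightarrow> complex) \<Rightarrow> complex" where
  "hinner k \<phi> \<psi> = (\<Sum>y\<in>words k. cnj (\<phi> y) * \<psi> y)"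

definition Pcyl :: "bool list \<Rightarrow> (bool list \<Rightarrow> complex) \<Rightarrow> (bool list \<Rightarrow> complex)" where
  "Pcyl w \<phi> = (\<lambda>y. if take (length w) y = w then \<phi> y else 0)"

definition PTinv :: "nat \<Rightarrow> bool list \<Rightarrow> (bool list \<Rightarrow> complex) \<Rightarrow> (bool list \<Rightarrow> complex)" where
  "PTinv n w \<phi> = (\<lambda>z. \<Sum>y\<in>words n. Pcyl (y @ w) \<phi> z)"

text \<open>A \<open>2\<times>2\<close> matrix \<open>U :: bool \<Rightarrow> bool \<Rightarrow> complex\<close>, \<open>U i j = \<langle>i|U|j\<rangle>\<close>.\<close>
definition unitary2 :: "(bool \<Rightarrow> bool \<Rightarrow> complex) \<Rightarrow> bool" where
  "unitary2 U \<longleftrightarrow> (\<forall>i j. (\<Sum>l\<in>UNIV. cnj (U l i) * U l j) = (if i = j then 1 else 0))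
                  \<and> (\<forall>i j. (\<Sum>l\<in>UNIV. U i l * cnj (U j l)) = (if i = j then 1 else 0))"

text \<open>matrix entry \<open>\<langle>z|Ubar|y\<rangle>\<close> of \<open>Ubar|y\<rangle> = |y_2..y_k\<rangle> \<otimes> U|y_1\<rangle>\<close>\<close>
definition Ubar_ent :: "nat \<Rightarrow> (bool \<Rightarrow> bool \<Rightarrow> complex) \<Rightarrow> bool list \<Rightarrow> bool list \<Rightarrow> complex" where
  "Ubar_ent k U z y =
     (if length z = k \<and> length y = k \<and> butlast z = tl y then U (last z) (hd y) else 0)"

definition Ubar :: "nat \<Rightarrow> (bool \<Rightarrow> bool \<Rightarrow> complex) \<Rightarrow> (bool list \<Rightarrow> complex) \<Rightarrow> (bool list \<Rightarrow> complex)" where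
  "Ubar k U \<phi> = (\<lambda>z. \<Sum>y\<in>words k. Ubar_ent k U z y * \<phi> y)"

definition Ubar_adj :: "nat \<Rightarrow> (bool \<Rightarrow> bool \<Rightarrow> complex) \<Rightarrow> (bool list \<Rightarrow> complex) \<Rightarrow> (bool list \<Rightarrow> complex)" where
  "Ubar_adj k U \<phi> = (\<lambda>y. \<Sum>z\<in>words k. cnj (Ubar_ent k U z y) * \<phi> z)"

definition Pprime :: "nat \<Rightarrow> (bool \<Rightarrow> bool \<Rightarrow> complex) \<Rightarrow> bool \<Rightarrow> (bool list \<Rightarrow> complex) \<Rightarrow> (bool list \<Rightarrow> complex)" where
  "Pprime k U j \<phi> = Ubar k U (Pcyl [j] (Ubar_adj k U \<phi>))"

definition swap_last2 :: "bool list \<Rightarrow> bool list" where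
  "swap_last2 z = butlast (butlast z) @ [last z, last (butlast z)]"

definition sigma :: "nat \<Rightarrow> (bool list \<Rightarrow> complex) \<Rightarrow> (bool list \<Rightarrow> complex)" where
  "sigma k \<phi> = (\<lambda>z. if length z = k then \<phi> (swap_last2 z) else 0)"

definition tower :: "nat \<Rightarrow> (bool \<Rightarrow> bool \<Rightarrow> complex) \<Rightarrow> ((bool list \<Rightarrow> complex) \<times> (bool list \<Rightarrow> complex)) set" where
  "tower k U = Hsp k \<times> (Pprime k U True ` Hsp k)"

definition tinner :: "nat \<Rightarrow> (bool list \<Rightarrow> complex) \<times> (bool list \<Rightarrow> complex)
      \<Rightarrow> (bool list \<Rightarrow> complex) \<times> (bool list \<Rightarrow> complex) \<Rightarrow> complex" where
  "tinner k \<Phi> \<Psi> = hinner k (fst \<Phi>) (fst \<Psi>) + hinner k (snd \<Phi>) (snd \<Psi>)"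

definition dsum :: "(('a \<Rightarrow> complex) \<Rightarrow> ('a \<Rightarrow> complex)) \<Rightarrow> (('a \<Rightarrow> complex) \<Rightarrow> ('a \<Rightarrow> complex))
      \<Rightarrow> ('a \<Rightarrow> complex) \<times> ('a \<Rightarrow> complex) \<Rightarrow> ('a \<Rightarrow> complex) \<times> ('a \<Rightarrow> complex)" where
  "dsum A B \<Phi> = (A (fst \<Phi>), B (snd \<Phi>))"

definition Utilde :: "nat \<Rightarrow> (bool \<Rightarrow> bool \<Rightarrow> complex) \<Rightarrow> real
      \<Rightarrow> (bool list \<Rightarrow> complex) \<times> (bool list \<Rightarrow> complex) \<Rightarrow> (bool list \<Rightarrow> complex) \<times> (bool list \<Rightarrow> complex)" where
  "Utilde k U \<theta> \<Phi> =
     ((\<lambda>z. sigma k (Ubar k U (Pprime k U True (snd \<Phi>))) z + Ubar k U (Pcyl [False] (fst \<Phi>)) z),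
      (\<lambda>z. exp (\<i> * of_real \<theta>) * Ubar k U (Pcyl [True] (fst \<Phi>)) z))"

text \<open>\<open>V^* A V = B\<close> as operators on the tower space, expressed through the
  defining property of the adjoint: \<open>\<langle>\<Psi>, V^* A V \<Phi>\<rangle> = \<langle>V \<Psi>, A V \<Phi>\<rangle>\<close>.\<close>
definition conj_eq_on_tower ::
  "nat \<Rightarrow> (bool \<Rightarrow> bool \<Rightarrow> complex) \<Rightarrow> (_ \<Rightarrow> _) \<Rightarrow> (_ \<Rightarrow> _) \<Rightarrow> (_ \<Rightarrow> _) \<Rightarrow> bool" where
  "conj_eq_on_tower k U V A B \<longleftrightarrow>
     (\<forall>\<Psi>\<in>tower k U. \<forall>\<Phi>\<in>tower k U. tinner k (V \<Psi>) (A (V \<Phi>)) = tinner k \<Psi> (B \<Phi>))"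

end

theory Submission imports Defs begin

lemma finite_words[simp]: "finite (words n)"
  using finite_lists_length_eq[of "UNIV::bool set" n] by (simp add: words_def)

lemma sum_bool: "(\<Sum>b\<in>(UNIV::bool set). f b) = f False + f True"
  by (simp add: UNIV_bool)

lemma words_Suc_cons: "words (Suc n) = (\<lambda>(b,w). b # w) ` (UNIV \<times> words n)"
proof
  show "words (Suc n) \<subseteq> (\<lambda>(b,w). b # w) ` (UNIV \<times> words n)"
  proof
    fix y assume "y \<in> words (Suc n)"
    then obtain b w where "y = b # w" "length w = n" by (cases y) (auto simp: words_def)
    then show "y \<in> (\<lambda>(b,w). b # w) ` (UNIV \<times> words n)" by (auto simp: words_def image_iff)
  qed
qed (auto simp: words_def)

lemma sum_words_Suc: "(\<Sum>y\<in>words (Suc n). f y) = (\<Sum>b\<in>UNIV. \<Sum>w\<in>words n. f (b # w))"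
  by (simp add: words_Suc_cons sum.reindex inj_on_def sum.cartesian_product split_def)

lemma words_Suc_snoc: "words (Suc n) = (\<lambda>(w,b). w @ [b]) ` (words n \<times> UNIV)"
proof
  show "words (Suc n) \<subseteq> (\<lambda>(w,b). w @ [b]) ` (words n \<times> UNIV)"
  proof
    fix y assume "y \<in> words (Suc n)"
    then obtain b w where "y = w @ [b]" "length w = n"
      by (metis (mono_tags, lifting) append_butlast_last_id diff_Suc_1 length_butlast list.size(3) mem_Collect_eq nat.distinct(1) words_def)
    then show "y \<in> (\<lambda>(w,b). w @ [b]) ` (words n \<times> UNIV)" by (auto simp: words_def image_iff)
  qed
qed (auto simp: words_def)

lemma sum_words_snoc: "(\<Sum>y\<in>words (Suc n). f y) = (\<Sum>w\<in>words n. \<Sum>b\<in>UNIV. f (w @ [b]))"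
  by (simp add: words_Suc_snoc sum.reindex inj_on_def sum.cartesian_product split_def)

lemma Ubar_closed:
  assumes "0 < k"
  shows "Ubar k U \<phi> z = (if length z = k then U (last z) False * \<phi> (False # butlast z) + U (last z) True * \<phi> (True # butlast z) else 0)"
proof -
  obtain n where k: "k = Suc n" using assms by (cases k) auto
  show ?thesis
  proof (cases "length z = k")
    case True
    have bz: "butlast z \<in> words n" using True k by (simp add: words_def)
    have "Ubar k U \<phi> z = (\<Sum>b\<in>UNIV. \<Sum>w\<in>words n. (if butlast z = w then U (last z) b * \<phi> (b # w) else 0))"
      unfolding Ubar_def Ubar_ent_def k sum_words_Suc
      by (intro sum.cong refl) (use True k in \<open>auto simp: words_def\<close>)
    also have "\<dots> = (\<Sum>b\<in>UNIV. U (last z) b * \<phi> (b # butlast z))"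
      using bz by (simp add: sum.delta)
    finally show ?thesis using True by (simp add: sum_bool)
  next
    case False
    then show ?thesis by (simp add: Ubar_def Ubar_ent_def)
  qed
qed

lemma Ubar_adj_closed:
  assumes "0 < k"
  shows "Ubar_adj k U \<phi> y = (if length y = k then cnj (U False (hd y)) * \<phi> (tl y @ [False]) + cnj (U True (hd y)) * \<phi> (tl y @ [True]) else 0)"
proof -
  obtain n where k: "k = Suc n" using assms by (cases k) auto
  show ?thesis
  proof (cases "length y = k")
    case True
    have bz: "tl y \<in> words n" using True k by (simp add: words_def)
    have "Ubar_adj k U \<phi> y = (\<Sum>w\<in>words n. \<Sum>b\<in>UNIV. (if w = tl y then cnj (U b (hd y)) * \<phi> (w @ [b]) else 0))"
      unfolding Ubar_adj_def Ubar_ent_def k sum_words_snoc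
      by (intro sum.cong refl) (use True k in \<open>auto simp: words_def\<close>)
    also have "\<dots> = (\<Sum>b\<in>UNIV. \<Sum>w\<in>words n. (if w = tl y then cnj (U b (hd y)) * \<phi> (w @ [b]) else 0))"
      by (rule sum.swap)
    also have "\<dots> = (\<Sum>b\<in>UNIV. cnj (U b (hd y)) * \<phi> (tl y @ [b]))"
      using bz by (simp add: sum.delta)
    finally show ?thesis using True by (simp add: sum_bool)
  next
    case False
    then show ?thesis by (simp add: Ubar_adj_def Ubar_ent_def)
  qed
qed

lemma unit1: "unitary2 U \<Longrightarrow> cnj (U False i) * U False j + cnj (U True i) * U True j = (if i = j then 1 else 0)"
  unfolding unitary2_def by (metis sum_bool)

lemma Ubar_Hsp: "Ubar k U \<phi> \<in> Hsp k"
  by (simp add: Hsp_def Ubar_def Ubar_ent_def)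
lemma Ubar_adj_Hsp: "Ubar_adj k U \<phi> \<in> Hsp k"
  by (simp add: Hsp_def Ubar_adj_def Ubar_ent_def)
lemma Pcyl_Hsp: "\<phi> \<in> Hsp k \<Longrightarrow> Pcyl w \<phi> \<in> Hsp k"
  by (simp add: Hsp_def Pcyl_def)
lemma sigma_Hsp: "sigma k \<phi> \<in> Hsp k"
  by (simp add: Hsp_def sigma_def)
lemma Pprime_Hsp: "Pprime k U j \<phi> \<in> Hsp k"
  by (simp add: Pprime_def Ubar_Hsp)

lemma UadjU:
  assumes "0 < k" "unitary2 U" "\<phi> \<in> Hsp k"
  shows "Ubar_adj k U (Ubar k U \<phi>) = \<phi>"
proof
  fix y
  show "Ubar_adj k U (Ubar k U \<phi>) y = \<phi> y"
  proof (cases "length y = k")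
    case False then show ?thesis using assms by (simp add: Ubar_adj_closed Hsp_def)
  next
    case True
    then obtain h t where y: "y = h # t" using assms(1) by (cases y) auto
    have lt: "length (t @ [b]) = k" for b using True y by simp
    have "Ubar_adj k U (Ubar k U \<phi>) y =
      \<phi> (False # t) * (cnj (U False h) * U False False + cnj (U True h) * U True False)
      + \<phi> (True # t) * (cnj (U False h) * U False True + cnj (U True h) * U True True)"
      using True assms(1) lt y by (simp add: Ubar_adj_closed Ubar_closed algebra_simps)
    also have "\<dots> = \<phi> y" using unit1[OF assms(2)] y by (cases h) auto
    finally show ?thesis .
  qed
qed

lemma hinner_adj: "hinner k \<phi> (Ubar k U \<psi>) = hinner k (Ubar_adj k U \<phi>) \<psi>"
proof -
  have "hinner k \<phi> (Ubar k U \<psi>) = (\<Sum>z\<in>words k. \<Sum>y\<in>words k. cnj (\<phi> z) * (Ubar_ent k U z y * \<psi> y))"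
    by (simp add: hinner_def Ubar_def sum_distrib_left)
  also have "\<dots> = (\<Sum>y\<in>words k. \<Sum>z\<in>words k. cnj (\<phi> z) * (Ubar_ent k U z y * \<psi> y))"
    by (rule sum.swap)
  also have "\<dots> = hinner k (Ubar_adj k U \<phi>) \<psi>"
    by (simp add: hinner_def Ubar_adj_def sum_distrib_right sum_distrib_left mult_ac)
  finally show ?thesis .
qed

lemma hinner_cnj: "hinner k \<phi> \<psi> = cnj (hinner k \<psi> \<phi>)"
  by (simp add: hinner_def mult.commute)

lemma hinner_adj2: "hinner k (Ubar k U \<phi>) \<psi> = hinner k \<phi> (Ubar_adj k U \<psi>)"
  by (metis hinner_adj hinner_cnj)

lemma hinner_Pcyl: "hinner k \<phi> (Pcyl w \<psi>) = hinner k (Pcyl w \<phi>) \<psi>"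
  unfolding hinner_def Pcyl_def by (intro sum.cong) auto

lemma hinner_add_left: "hinner k (\<lambda>z. f z + g z) h = hinner k f h + hinner k g h"
  by (simp add: hinner_def sum.distrib algebra_simps)
lemma hinner_add_right: "hinner k h (\<lambda>z. f z + g z) = hinner k h f + hinner k h g"
  by (simp add: hinner_def sum.distrib algebra_simps)
lemma hinner_zero_right: "hinner k h (\<lambda>z. 0) = 0"
  by (simp add: hinner_def)
lemma hinner_scale: "hinner k (\<lambda>z. c * f z) (\<lambda>z. c * g z) = cnj c * c * hinner k f g"
  by (simp add: hinner_def sum_distrib_left mult_ac)

lemma Pcyl_add: "Pcyl w (\<lambda>z. f z + g z) = (\<lambda>z. Pcyl w f z + Pcyl w g z)"
  by (auto simp: Pcyl_def)
lemma Pcyl_scale: "Pcyl w (\<lambda>z. c * f z) = (\<lambda>z. c * Pcyl w f z)"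
  by (auto simp: Pcyl_def)
lemma Pcyl_Pcyl: "Pcyl w (Pcyl w f) = Pcyl w f"
  by (auto simp: Pcyl_def)

lemma Ubar_scale: "Ubar k U (\<lambda>z. c * f z) = (\<lambda>z. c * Ubar k U f z)"
  by (auto simp: Ubar_def sum_distrib_left mult_ac)
lemma Ubar_adj_scale: "Ubar_adj k U (\<lambda>z. c * f z) = (\<lambda>z. c * Ubar_adj k U f z)"
  by (auto simp: Ubar_adj_def sum_distrib_left mult_ac)
lemma Pprime_scale: "Pprime k U j (\<lambda>z. c * f z) = (\<lambda>z. c * Pprime k U j f z)"
  by (simp add: Pprime_def Ubar_scale Ubar_adj_scale Pcyl_scale)

lemma Pprime_sa: "hinner k (Pprime k U j f) g = hinner k f (Pprime k U j g)"
  by (simp add: Pprime_def hinner_adj2 hinner_adj hinner_Pcyl)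

lemma Pprime_idem:
  assumes "0 < k" "unitary2 U"
  shows "Pprime k U j (Pprime k U j f) = Pprime k U j f"
  unfolding Pprime_def
  by (simp add: UadjU[OF assms Pcyl_Hsp[OF Ubar_adj_Hsp]] Pcyl_Pcyl)

lemma PTinv1: "PTinv 1 x \<phi> = (\<lambda>z. if z \<noteq> [] \<and> take (length x) (tl z) = x then \<phi> z else 0)"
proof
  fix z
  have w1: "words (Suc 0) = {[False],[True]}" by (auto simp: words_def length_Suc_conv)
  show "PTinv 1 x \<phi> z = (if z \<noteq> [] \<and> take (length x) (tl z) = x then \<phi> z else 0)"
    by (cases z) (auto simp: PTinv_def w1 Pcyl_def)
qed

lemma PTinv1s: "PTinv (Suc 0) x \<phi> = (\<lambda>z. if z \<noteq> [] \<and> take (length x) (tl z) = x then \<phi> z else 0)"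
  using PTinv1 by simp

lemma swap_app[simp]: "swap_last2 (a @ [p, q]) = a @ [q, p]"
  by (simp add: swap_last2_def butlast_append)

lemma len2_split: assumes "2 \<le> length z" obtains a p q where "z = a @ [p, q]"
proof -
  obtain ys q where z: "z = ys @ [q]" using assms by (cases z rule: rev_exhaust) auto
  then obtain a p where "ys = a @ [p]" using assms by (cases ys rule: rev_exhaust) auto
  then show ?thesis using z that by auto
qed

lemma sw_props: "2 \<le> length z \<Longrightarrow> swap_last2 (swap_last2 z) = z \<and> length (swap_last2 z) = length z"
  by (erule len2_split) auto

lemma sigma_sa:
  assumes "2 \<le> k"
  shows "hinner k (sigma k f) g = hinner k f (sigma k g)"
proof -
  have "hinner k (sigma k f) g = (\<Sum>z\<in>words k. cnj (f (swap_last2 z)) * g z)"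
    unfolding hinner_def sigma_def by (intro sum.cong) (auto simp: words_def)
  also have "\<dots> = (\<Sum>z\<in>words k. cnj (f z) * g (swap_last2 z))"
    by (rule sum.reindex_bij_witness[where i=swap_last2 and j=swap_last2])
       (use assms sw_props in \<open>auto simp: words_def\<close>)
  also have "\<dots> = hinner k f (sigma k g)"
    unfolding hinner_def sigma_def by (intro sum.cong) (auto simp: words_def)
  finally show ?thesis .
qed

lemma sigma_inv: "2 \<le> k \<Longrightarrow> f \<in> Hsp k \<Longrightarrow> sigma k (sigma k f) = f"
  by (auto simp: sigma_def Hsp_def sw_props)

lemma Pcyl_sigma:
  assumes "length x + 2 \<le> k"
  shows "Pcyl x (sigma k f) = sigma k (Pcyl x f)"
proof
  fix z
  show "Pcyl x (sigma k f) z = sigma k (Pcyl x f) z"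
  proof (cases "length z = k")
    case True
    have "2 \<le> length z" using True assms by simp
    then obtain a p q where z: "z = a @ [p, q]" by (rule len2_split)
    have "length x \<le> length a" using True z assms by simp
    then show ?thesis using True z by (simp add: Pcyl_def sigma_def)
  qed (simp add: Pcyl_def sigma_def)
qed

lemma K1:
  assumes "0 < k" "length x < k"
  shows "Ubar_adj k U (Pcyl x f) = PTinv 1 x (Ubar_adj k U f)"
proof
  fix y
  show "Ubar_adj k U (Pcyl x f) y = PTinv 1 x (Ubar_adj k U f) y"
  proof (cases "length y = k")
    case True
    then obtain h t where y: "y = h # t" using assms(1) by (cases y) auto
    have "length x \<le> length t" using True y assms by simp
    then show ?thesis using True y assms by (simp add: Ubar_adj_closed PTinv1s Pcyl_def)
  qed (simp add: Ubar_adj_closed PTinv1s assms)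
qed

definition lastq :: "nat \<Rightarrow> (bool \<Rightarrow> bool \<Rightarrow> complex) \<Rightarrow> bool \<Rightarrow> (bool list \<Rightarrow> complex) \<Rightarrow> bool" where
  "lastq k U j f \<longleftrightarrow> (\<exists>g. f = (\<lambda>z. if length z = k then U (last z) j * g (butlast z) else 0))"

lemma lastq_orth:
  assumes "0 < k" "unitary2 U" "lastq k U j f" "lastq k U j' f'" "j \<noteq> j'"
  shows "hinner k f f' = 0"
proof -
  obtain n where k: "k = Suc n" using assms by (cases k) auto
  obtain g where g: "f = (\<lambda>z. if length z = k then U (last z) j * g (butlast z) else 0)"
    using assms(3) lastq_def by blast
  obtain h where h: "f' = (\<lambda>z. if length z = k then U (last z) j' * h (butlast z) else 0)"
    using assms(4) lastq_def by blast
  have "hinner k f f' = (\<Sum>w\<in>words n. cnj (g w) * h w * (cnj (U False j) * U False j' + cnj (U True j) * U True j'))"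
    unfolding hinner_def k sum_words_snoc sum_bool
    by (intro sum.cong refl) (simp add: g h k words_def algebra_simps)
  also have "\<dots> = 0" using unit1[OF assms(2), of j j'] assms(5) by simp
  finally show ?thesis .
qed

lemma lastq_Pcyl:
  assumes "length x < k" "lastq k U j f"
  shows "lastq k U j (Pcyl x f)"
proof -
  obtain g where g: "f = (\<lambda>z. if length z = k then U (last z) j * g (butlast z) else 0)"
    using assms(2) lastq_def by blast
  have "Pcyl x f = (\<lambda>z. if length z = k then U (last z) j * Pcyl x g (butlast z) else 0)"
  proof
    fix z show "Pcyl x f z = (if length z = k then U (last z) j * Pcyl x g (butlast z) else 0)"
      using assms(1) by (auto simp: g Pcyl_def take_butlast)
  qed
  then show ?thesis unfolding lastq_def by blast
qed

lemma lastq_UPcyl: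
  assumes "0 < k"
  shows "lastq k U j (Ubar k U (Pcyl [j] \<phi>))"
proof -
  have "Ubar k U (Pcyl [j] \<phi>) = (\<lambda>z. if length z = k then U (last z) j * (\<lambda>w. \<phi> (j # w)) (butlast z) else 0)"
    by (rule ext) (cases j; simp add: Ubar_closed[OF assms] Pcyl_def)
  then show ?thesis unfolding lastq_def by (intro exI[of _ "\<lambda>w. \<phi> (j # w)"])
qed

lemma lastq_sigmaU:
  assumes "3 \<le> k" "lastq k U j f"
  shows "lastq k U j (sigma k (Ubar k U f))"
proof -
  obtain g where g: "f = (\<lambda>z. if length z = k then U (last z) j * g (butlast z) else 0)"
    using assms(2) lastq_def by blast
  define G where "G w = U (last w) False * g (False # butlast w) + U (last w) True * g (True # butlast w)" for w
  have "sigma k (Ubar k U f) = (\<lambda>z. if length z = k then U (last z) j * G (butlast z) else 0)"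
  proof
    fix z
    show "sigma k (Ubar k U f) z = (if length z = k then U (last z) j * G (butlast z) else 0)"
    proof (cases "length z = k")
      case True
      have "2 \<le> length z" using True assms by simp
      then obtain a p q where z: "z = a @ [p, q]" by (rule len2_split)
      show ?thesis using True assms(1) by (simp add: z sigma_def Ubar_closed g G_def butlast_append algebra_simps)
    qed (simp add: sigma_def)
  qed
  then show ?thesis unfolding lastq_def by blast
qed

lemma mask_comm: "Pcyl w (PTinv 1 x (Pcyl w f)) = Pcyl w (PTinv 1 x f)"
  by (rule ext) (simp add: PTinv1s Pcyl_def)

lemma exp_unit: "cnj (exp (\<i> * complex_of_real \<theta>)) * exp (\<i> * complex_of_real \<theta>) = 1"
proof -
  have "exp (\<i> * complex_of_real \<theta>) * cnj (exp (\<i> * complex_of_real \<theta>)) = complex_of_real ((cmod (exp (\<i> * complex_of_real \<theta>)))^2)"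
    by (rule complex_norm_square[symmetric])
  also have "\<dots> = 1" by simp
  finally show ?thesis by (simp add: mult.commute)
qed

theorem proposition7:
  fixes k :: nat and U :: "bool \<Rightarrow> bool \<Rightarrow> complex" and \<theta> :: real and x :: "bool list"
  assumes "k \<ge> 3"
    and "unitary2 U"
    and "\<forall>i j. cmod (U i j) = 1 / sqrt 2"
    and "length x < k - 1"
  shows "conj_eq_on_tower k U (Utilde k U \<theta>)
           (dsum (Pcyl x) (\<lambda>\<phi> _. 0))
           (dsum (\<lambda>\<phi>. Pcyl [False] (PTinv 1 x \<phi>)) (\<lambda>\<phi>. Pprime k U True (PTinv 1 x \<phi>)))
       \<and> conj_eq_on_tower k U (Utilde k U \<theta>)
           (dsum (\<lambda>\<phi> _. 0) (\<lambda>\<phi>. Pprime k U True (Pcyl x \<phi>)))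
           (dsum (\<lambda>\<phi>. Pcyl [True] (PTinv 1 x \<phi>)) (\<lambda>\<phi> _. 0))"
proof -
  have k0: "0 < k" and k2: "2 \<le> k" and k3: "3 \<le> k" using assms(1) by auto
  have xk: "length x < k" and xk2: "length x + 2 \<le> k" using assms(4) by auto
  note uni = assms(2)
  define A where "A = Ubar k U"
  define Ad where "Ad = Ubar_adj k U"
  define P' where "P' = Pprime k U True"
  define Q where "Q = PTinv 1 x"
  define h where "h = hinner k"
  define e where "e = exp (\<i> * complex_of_real \<theta>)"
  have AdA: "Ad (A f) = f" if "f \<in> Hsp k" for f using UadjU[OF k0 uni that] by (simp add: A_def Ad_def)
  have hA: "h f (A g) = h (Ad f) g" for f g by (simp add: h_def A_def Ad_def hinner_adj)
  have hA2: "h (A f) g = h f (Ad g)" for f g by (simp add: h_def A_def Ad_def hinner_adj2)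
  have AH: "A f \<in> Hsp k" for f by (simp add: A_def Ubar_Hsp)
  have K: "h (A f) (Pcyl x (A g)) = h f (Q g)" if "g \<in> Hsp k" for f g
    using that by (simp add: hA2 Ad_def K1[OF k0 xk] Q_def) (simp add: Ad_def[symmetric] AdA)
  have P'idem: "P' (P' f) = P' f" for f by (simp add: P'_def Pprime_idem[OF k0 uni])
  have P'sa: "h (P' f) g = h f (P' g)" for f g by (simp add: P'_def h_def Pprime_sa)
  have e1: "cnj e * e = 1" by (simp add: e_def exp_unit)
  show ?thesis
  proof
    show "conj_eq_on_tower k U (Utilde k U \<theta>)
           (dsum (Pcyl x) (\<lambda>\<phi> _. 0))
           (dsum (\<lambda>\<phi>. Pcyl [False] (PTinv 1 x \<phi>)) (\<lambda>\<phi>. Pprime k U True (PTinv 1 x \<phi>)))"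
      unfolding conj_eq_on_tower_def
    proof (intro ballI)
      fix \<Psi> \<Phi> assume "\<Psi> \<in> tower k U" "\<Phi> \<in> tower k U"
      then obtain \<psi>0 \<psi>1 \<phi>0 \<phi>1 \<chi> \<xi> where Psi: "\<Psi> = (\<psi>0, \<psi>1)" and Phi: "\<Phi> = (\<phi>0, \<phi>1)"
        and H0: "\<psi>0 \<in> Hsp k" "\<phi>0 \<in> Hsp k" and p1: "\<psi>1 = P' \<chi>" and f1: "\<phi>1 = P' \<xi>"
        unfolding tower_def P'_def by (cases \<Psi>, cases \<Phi>) auto
      have psi1: "P' \<psi>1 = \<psi>1" "P' \<phi>1 = \<phi>1" using p1 f1 P'idem by auto
      have H1: "\<phi>1 \<in> Hsp k" by (simp add: f1 P'_def Pprime_Hsp)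
      define sa where "sa = sigma k (A \<psi>1)"
      define b where "b = A (Pcyl [False] \<psi>0)"
      define sc where "sc = sigma k (A \<phi>1)"
      define d where "d = A (Pcyl [False] \<phi>0)"
      have U1: "fst (Utilde k U \<theta> \<Psi>) = (\<lambda>z. sa z + b z)" "fst (Utilde k U \<theta> \<Phi>) = (\<lambda>z. sc z + d z)"
        by (simp_all add: Utilde_def Psi Phi sa_def b_def sc_def d_def A_def psi1[unfolded P'_def])
      have lq: "lastq k U True sa" "lastq k U True sc" "lastq k U False b" "lastq k U False d"
        unfolding sa_def sc_def b_def d_def A_def using p1 f1 unfolding P'_def Pprime_def
        by (auto intro!: lastq_sigmaU[OF k3] lastq_UPcyl[OF k0])
      have t1: "h sa (Pcyl x sc) = h \<psi>1 (Q \<phi>1)"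
      proof -
        have "h sa (Pcyl x sc) = h (sigma k (A \<psi>1)) (sigma k (Pcyl x (A \<phi>1)))"
          by (simp add: sa_def sc_def Pcyl_sigma[OF xk2])
        also have "\<dots> = h (A \<psi>1) (Pcyl x (A \<phi>1))"
          by (simp add: h_def sigma_sa[OF k2] sigma_inv[OF k2] Pcyl_Hsp AH)
        also have "\<dots> = h \<psi>1 (Q \<phi>1)" using K H1 by simp
        finally show ?thesis .
      qed
      have t2: "h sa (Pcyl x d) = 0"
        unfolding h_def by (rule lastq_orth[OF k0 uni lq(1) lastq_Pcyl[OF xk lq(4)]]) simp
      have t3: "h b (Pcyl x sc) = 0"
        unfolding h_def by (rule lastq_orth[OF k0 uni lq(3) lastq_Pcyl[OF xk lq(2)]]) simp
      have t4: "h b (Pcyl x d) = h \<psi>0 (Pcyl [False] (Q \<phi>0))"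
      proof -
        have "h b (Pcyl x d) = h (Pcyl [False] \<psi>0) (Q (Pcyl [False] \<phi>0))"
          unfolding b_def d_def by (rule K) (simp add: Pcyl_Hsp H0)
        also have "\<dots> = h \<psi>0 (Pcyl [False] (Q \<phi>0))"
          unfolding h_def Q_def hinner_Pcyl[symmetric] mask_comm ..
        finally show ?thesis .
      qed
      have t5: "h \<psi>1 (P' (Q \<phi>1)) = h \<psi>1 (Q \<phi>1)"
        by (metis P'sa psi1(1))
      show "tinner k (Utilde k U \<theta> \<Psi>) (dsum (Pcyl x) (\<lambda>\<phi> _. 0) (Utilde k U \<theta> \<Phi>)) =
            tinner k \<Psi> (dsum (\<lambda>\<phi>. Pcyl [False] (PTinv 1 x \<phi>)) (\<lambda>\<phi>. Pprime k U True (PTinv 1 x \<phi>)) \<Phi>)"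
        unfolding tinner_def dsum_def U1 Pcyl_add
        using t1 t2 t3 t4 t5
        by (simp add: h_def hinner_add_left hinner_add_right hinner_zero_right Psi Phi Q_def P'_def)
    qed
  next
    show "conj_eq_on_tower k U (Utilde k U \<theta>)
           (dsum (\<lambda>\<phi> _. 0) (\<lambda>\<phi>. Pprime k U True (Pcyl x \<phi>)))
           (dsum (\<lambda>\<phi>. Pcyl [True] (PTinv 1 x \<phi>)) (\<lambda>\<phi> _. 0))"
      unfolding conj_eq_on_tower_def
    proof (intro ballI)
      fix \<Psi> \<Phi> assume "\<Psi> \<in> tower k U" "\<Phi> \<in> tower k U"
      then obtain \<psi>0 \<psi>1 \<phi>0 \<phi>1 where Psi: "\<Psi> = (\<psi>0, \<psi>1)" and Phi: "\<Phi> = (\<phi>0, \<phi>1)"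
        and H0: "\<psi>0 \<in> Hsp k" "\<phi>0 \<in> Hsp k"
        unfolding tower_def by (cases \<Psi>, cases \<Phi>) auto
      have U2: "snd (Utilde k U \<theta> \<Psi>) = (\<lambda>z. e * A (Pcyl [True] \<psi>0) z)"
               "snd (Utilde k U \<theta> \<Phi>) = (\<lambda>z. e * A (Pcyl [True] \<phi>0) z)"
        by (simp_all add: Utilde_def Psi Phi e_def A_def)
      have PA: "P' (A (Pcyl [True] \<psi>0)) = A (Pcyl [True] \<psi>0)"
        unfolding P'_def Pprime_def A_def[symmetric] Ad_def[symmetric]
        by (simp add: AdA Pcyl_Hsp H0 Pcyl_Pcyl)
      have main: "h (A (Pcyl [True] \<psi>0)) (P' (Pcyl x (A (Pcyl [True] \<phi>0)))) = h \<psi>0 (Pcyl [True] (Q \<phi>0))"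
      proof -
        have "h (A (Pcyl [True] \<psi>0)) (P' (Pcyl x (A (Pcyl [True] \<phi>0))))
            = h (A (Pcyl [True] \<psi>0)) (Pcyl x (A (Pcyl [True] \<phi>0)))"
          by (metis P'sa PA)
        also have "\<dots> = h (Pcyl [True] \<psi>0) (Q (Pcyl [True] \<phi>0))"
          by (rule K) (simp add: Pcyl_Hsp H0)
        also have "\<dots> = h \<psi>0 (Pcyl [True] (Q \<phi>0))"
          unfolding h_def Q_def hinner_Pcyl[symmetric] mask_comm ..
        finally show ?thesis .
      qed
      show "tinner k (Utilde k U \<theta> \<Psi>) (dsum (\<lambda>\<phi> _. 0) (\<lambda>\<phi>. Pprime k U True (Pcyl x \<phi>)) (Utilde k U \<theta> \<Phi>)) =
            tinner k \<Psi> (dsum (\<lambda>\<phi>. Pcyl [True] (PTinv 1 x \<phi>)) (\<lambda>\<phi> _. 0) \<Phi>)"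
        unfolding tinner_def dsum_def U2 Pcyl_scale Pprime_scale hinner_scale
        using main e1
        by (simp add: hinner_scale h_def hinner_zero_right Psi Phi Q_def P'_def)
    qed
  qed
qed

end
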